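(* Let $(x_k)_{k\geq0}$ be a nonnegative, monotone nonincreasing sequence of real numbers, and let $G=\{k\geq 0: x_k/x_{k+1}<2\}$. Then for all $n\geq 0$, \[ \sum_{k\leq n} x_k \leq 3x_0 + 3\sum_{\substack{k\in G\\ k\leq n}} x_{k+1}. \] *)

theory Defs
  imports Complex_Main
begin

end

theory Submission
  imports Defs
begin

theorem lemma2p4:
  fixes x :: "nat \<Rightarrow> real" and n :: nat
  assumes nonneg: "\<And>k. x k \<ge> 0"
    and noninc: "\<And>k. x (Suc k) \<le> x k"
  defines "G \<equiv> {k. x k / x (Suc k) < 2}"
  shows "(\<Sum>k\<le>n. x k) \<le> 3 * x 0 + 3 * (\<Sum>k\<in>G \<inter> {..n}. x (Suc k))"
proof -
  have notG: "2 * x (Suc k) \<le> x k" if "k \<notin> G" for k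
  proof -
    have h: "\<not> x k / x (Suc k) < 2" using that unfolding G_def by simp
    have "x (Suc k) \<noteq> 0" using h by auto
    hence "x (Suc k) > 0" using nonneg[of "Suc k"] by linarith
    thus ?thesis using h by (simp add: field_simps)
  qed
  have "(\<Sum>k\<le>m. x k) + 2 * x (Suc m) \<le> 3 * x 0 + 3 * (\<Sum>k\<in>G \<inter> {..m}. x (Suc k))" for m
  proof (induction m)
    case 0
    have "0 \<le> (\<Sum>k\<in>G \<inter> {..0}. x (Suc k))" by (rule sum_nonneg) (use nonneg in auto)
    then show ?case using noninc[of 0] by simp
  next
    case (Suc m)
    show ?case
    proof (cases "Suc m \<in> G")
      case True
      have "G \<inter> {..Suc m} = insert (Suc m) (G \<inter> {..m})" using True by auto
      hence "(\<Sum>k\<in>G \<inter> {..Suc m}. x (Suc k)) = x (Suc (Suc m)) + (\<Sum>k\<in>G \<inter> {..m}. x (Suc k))"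
        by simp
      then show ?thesis using Suc.IH noninc[of "Suc m"] nonneg[of "Suc (Suc m)"] by simp
    next
      case False
      have "G \<inter> {..Suc m} = G \<inter> {..m}" using False by (auto simp: le_Suc_eq)
      then show ?thesis using Suc.IH notG[OF False] by simp
    qed
  qed
  from this[of n] show ?thesis using nonneg[of "Suc n"] by linarith
qed

end
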